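(* Let $n\ge1$ and let $A_{ij}$ denote the coefficient of $u^iv^jw^{n-i-j}$ in $P_{1/n}(u,v,w)$, with $A_{ij}=0$ for pairs $(i,j)\in\mathbb{Z}^2$ not corresponding to a monomial of $P_{1/n}$. Then for all integers $i,j$: $$A_{ij}^2\ge A_{i-1,j}A_{i+1,j},\qquad A_{ij}^2\ge A_{i,j-1}A_{i,j+1},\qquad A_{ij}^2\ge A_{i-1,j+1}A_{i+1,j-1}.$$ That is, the coefficients are log-concave along every horizontal, vertical and anti-diagonal ($i+j=$const) line of the Newton polygon.
   Context: Markov polynomials. Let $x,y,z$ be indeterminates. Consider the set consisting of all rationals $\rho\in[0,1]$, each written in lowest terms $\rho=a/b$ with integers $a\ge 0$, $b\ge 1$, together with the formal symbol $1/0$. Define Laurent polynomials $M_\rho(x,y,z)$ recursively by $M_{1/0}=y$, $M_{0/1}=x$, $M_{1/1}=\frac{x^2+y^2}{z}$, and: whenever $a/b$, $c/d$ are in this set with $|ad-bc|=1$ and $(a+2c)/(b+2d)\in[0,1]$, then $M_{\frac{a+2c}{b+2d}}=\big(M_{c/d}^2+M_{\frac{a+c}{b+d}}^2\big)/M_{a/b}$. This determines $M_\rho$ for every rational $\rho\in[0,1]$. Numerator. For coprime $1\le a\le b$, $P_{a/b}(u,v,w)$ denotes the homogeneous polynomial of degree $a+b-1$ such that $M_{a/b}(x,y,z)=P_{a/b}(x^2,y^2,z^2)/(x^{a-1}y^{b-1}z^{a+b-1})$; its existence is known. *)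

theory Defs
  imports Main "HOL.Real"
begin

text \<open>Markov Laurent polynomials, represented by their evaluation on positive reals
(a Laurent polynomial in x,y,z is determined by its values on the open positive octant).
A rational rho = a/b in [0,1] in lowest terms is the pair (a,b); the symbol 1/0 is (1,0).
markov (a,b) M means that M is (the evaluation of) M_(a/b) as produced by the
recursive definition.\<close>

inductive markov :: "int \<times> int \<Rightarrow> (real \<Rightarrow> real \<Rightarrow> real \<Rightarrow> real) \<Rightarrow> bool" where
  m10: "markov (1, 0) (\<lambda>x y z. y)"
| m01: "markov (0, 1) (\<lambda>x y z. x)"
| m11: "markov (1, 1) (\<lambda>x y z. (x\<^sup>2 + y\<^sup>2) / z)"
| step: "\<lbrakk> markov (a, b) f; markov (c, d) g; markov (a + c, b + d) h;
           \<bar>a * d - b * c\<bar> = 1;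
           0 \<le> a + 2 * c; a + 2 * c \<le> b + 2 * d; 0 < b + 2 * d \<rbrakk>
         \<Longrightarrow> markov (a + 2 * c, b + 2 * d)
               (\<lambda>x y z. ((g x y z)\<^sup>2 + (h x y z)\<^sup>2) / f x y z)"

text \<open>P_coeffs a b A M: A i j is the coefficient of u^i v^j w^(a+b-1-i-j) of the
homogeneous polynomial P_(a/b) of degree a+b-1 (zero for pairs outside the triangle), i.e.
M(x,y,z) = P(x^2,y^2,z^2) / (x^(a-1) y^(b-1) z^(a+b-1)).\<close>

definition P_coeffs :: "nat \<Rightarrow> nat \<Rightarrow> (int \<Rightarrow> int \<Rightarrow> int) \<Rightarrow> (real \<Rightarrow> real \<Rightarrow> real \<Rightarrow> real) \<Rightarrow> bool" where
  "P_coeffs a b A M \<longleftrightarrow>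
     (let D = int (a + b - 1) in
      (\<forall>i j. (i < 0 \<or> j < 0 \<or> i + j > D) \<longrightarrow> A i j = 0) \<and>
      (\<forall>x y z :: real. x > 0 \<longrightarrow> y > 0 \<longrightarrow> z > 0 \<longrightarrow>
         M x y z = (\<Sum>i = 0..D. \<Sum>j = 0..D - i.
                      of_int (A i j) * (x\<^sup>2) ^ nat i * (y\<^sup>2) ^ nat j * (z\<^sup>2) ^ nat (D - i - j))
                   / (x ^ (a - 1) * y ^ (b - 1) * z ^ (a + b - 1))))"

end

theory Submission
  imports Defs Complex_Main
begin

fun Q :: "nat \<Rightarrow> real \<Rightarrow> real \<Rightarrow> real" where
  "Q 0 p q = 1"
| "Q (Suc 0) p q = p + q"
| "Q (Suc (Suc k)) p q = (p + q + 1) * Q (Suc k) p q - q * Q k p q"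

lemma Q_cassini: "Q (Suc (Suc k)) p q * Q k p q - (Q (Suc k) p q)\<^sup>2 = p * q ^ k"
proof (induction k)
  case 0
  then show ?case by (simp add: power2_eq_square algebra_simps)
next
  case (Suc k)
  have "Q (Suc (Suc (Suc k))) p q * Q (Suc k) p q - (Q (Suc (Suc k)) p q)\<^sup>2
     = q * (Q (Suc (Suc k)) p q * Q k p q - (Q (Suc k) p q)\<^sup>2)"
    by (simp only: Q.simps) (simp add: power2_eq_square algebra_simps)
  then show ?case using Suc by simp
qed

lemma Q_pos: assumes "p > 0" "q > 0" shows "Q k p q > 0 \<and> Q (Suc k) p q > 0"
proof (induction k)
  case 0
  then show ?case using assms by simp
next
  case (Suc k)
  have c: "Q (Suc (Suc k)) p q * Q k p q = (Q (Suc k) p q)\<^sup>2 + p * q ^ k"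
    using Q_cassini[of k p q] by simp
  have "(Q (Suc k) p q)\<^sup>2 + p * q ^ k > 0" using assms Suc by (simp add: add_pos_pos)
  then have "Q (Suc (Suc k)) p q * Q k p q > 0" using c by simp
  then have "Q (Suc (Suc k)) p q > 0" using Suc by (simp add: zero_less_mult_iff)
  then show ?case using Suc by simp
qed

lemma markov_inv:
  assumes "markov ab f"
  shows "fst ab \<ge> 0 \<and> snd ab \<ge> 0 \<and> (fst ab = 0 \<longrightarrow> snd ab = 1 \<and> (\<forall>x y z. f x y z = x))
     \<and> (fst ab = 1 \<longrightarrow> (\<forall>x y. x > 0 \<longrightarrow> y > 0 \<longrightarrow>
           f x y 1 = Q (nat (snd ab)) (x\<^sup>2) (y\<^sup>2) * y / y ^ nat (snd ab)))"
  using assms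
proof (induction rule: markov.induct)
  case m10
  then show ?case by simp
next
  case m01
  then show ?case by simp
next
  case m11
  then show ?case by simp
next
  case (step a b f c d g h)
  have a0: "a \<ge> 0" "b \<ge> 0" "c \<ge> 0" "d \<ge> 0" using step.IH by auto
  have nz: "a + 2 * c \<noteq> 0"
  proof
    assume "a + 2 * c = 0"
    then have "a = 0" "c = 0" using a0 by auto
    then show False using step.hyps(4) by simp
  qed
  moreover have "a + 2 * c = 1 \<longrightarrow> (\<forall>x y. x > 0 \<longrightarrow> y > 0 \<longrightarrow>
           ((g x y 1)\<^sup>2 + (h x y 1)\<^sup>2) / f x y 1
             = Q (nat (b + 2 * d)) (x\<^sup>2) (y\<^sup>2) * y / y ^ nat (b + 2 * d))"
  proof (intro impI allI)
    fix x y :: real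
    assume e: "a + 2 * c = 1" and x: "x > 0" and y: "y > 0"
    have ac: "a = 1" "c = 0" using e a0 by presburger+
    then have d1: "d = 1" and gx: "g x y 1 = x" using step.IH step.hyps(4) a0 by auto
    define k where "k = nat b"
    have bk: "b = int k" using a0 k_def by simp
    have fe: "f x y 1 = Q k (x\<^sup>2) (y\<^sup>2) * y / y ^ k"
      using step.IH(1) ac x y bk by simp
    have he: "h x y 1 = Q (Suc k) (x\<^sup>2) (y\<^sup>2) * y / y ^ Suc k"
    proof -
      have "nat (b + d) = Suc k" using bk d1 by simp
      then show ?thesis using step.IH(3) ac x y by simp
    qed
    have nb: "nat (b + 2 * d) = Suc (Suc k)" using bk d1 by simp
    define p where "p = x\<^sup>2"
    define q where "q = y\<^sup>2"
    have pq: "p > 0" "q > 0" using x y p_def q_def by auto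
    have Qp: "Q k p q > 0" using Q_pos[OF pq] by blast
    have cas: "Q (Suc (Suc k)) p q * Q k p q = (Q (Suc k) p q)\<^sup>2 + p * q ^ k"
      using Q_cassini[of k p q] by simp
    have yq: "y ^ (2 * k) = q ^ k" using q_def by (simp add: power_mult)
    have "((g x y 1)\<^sup>2 + (h x y 1)\<^sup>2) / f x y 1
        = (p + (Q (Suc k) p q)\<^sup>2 / y ^ (2 * k)) / (Q k p q * y / y ^ k)"
      using gx he fe y p_def q_def by (simp add: power_divide power_mult_distrib power_mult[symmetric] mult.commute)
    also have "\<dots> = (p * q ^ k + (Q (Suc k) p q)\<^sup>2) / q ^ k * y ^ k / (Q k p q * y)"
      using y Qp yq pq by (simp add: field_simps)
    also have "\<dots> = Q (Suc (Suc k)) p q * Q k p q * y ^ k / (q ^ k * Q k p q * y)"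
      using cas by (simp add: algebra_simps)
    also have "\<dots> = Q (Suc (Suc k)) p q * y ^ k / (q ^ k * y)"
      using Qp by simp
    also have "\<dots> = Q (Suc (Suc k)) p q * y / y ^ Suc (Suc k)"
    proof -
      have "y ^ (2 * k) = y ^ k * y ^ k" by (simp add: mult_2 power_add)
      then have "y ^ Suc (Suc k) * y ^ k = q ^ k * y * y" using yq[symmetric]
        by simp
      then show ?thesis using y pq by (simp del: Q.simps add: field_simps)
    qed
    finally show "((g x y 1)\<^sup>2 + (h x y 1)\<^sup>2) / f x y 1
             = Q (nat (b + 2 * d)) (x\<^sup>2) (y\<^sup>2) * y / y ^ nat (b + 2 * d)"
      using nb p_def q_def by simp
  qed
  ultimately show ?case using step.hyps a0 by auto
qed

lemma markov_1n:
  assumes "markov (1, int n) M" "x > 0" "y > 0"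
  shows "M x y 1 = Q n (x\<^sup>2) (y\<^sup>2) * y / y ^ n"
  using markov_inv[OF assms(1)] assms by auto


definition G :: "int \<Rightarrow> int \<Rightarrow> int" where
  "G m k = (if 0 \<le> k \<and> k \<le> m then int (nat m choose nat k) else 0)"

definition F :: "nat \<Rightarrow> int \<Rightarrow> int \<Rightarrow> int" where
  "F n i j = (if i = 0 then (if j = int n then 1 else 0)
              else G (int n - 1 - j) (i - 1) * G (i + j) i)"

lemma G_nonneg: "G m k \<ge> 0" by (simp add: G_def)

lemma G_pascal:
  assumes "k \<noteq> 0"
  shows "G m k = G (m - 1) (k - 1) + G (m - 1) k"
proof (cases "k < 0 \<or> m < 1")
  case True
  then show ?thesis using assms by (auto simp: G_def)
next
  case False
  then obtain K M where kK: "k = int (Suc K)" and mM: "m = int (Suc M)"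
  proof -
    have "k \<ge> 1" "m \<ge> 1" using False assms by auto
    then have "k = int (Suc (nat (k - 1)))" "m = int (Suc (nat (m - 1)))" by auto
    then show ?thesis using that by blast
  qed
  have n1: "nat k = Suc K" "nat m = Suc M" "nat (k - 1) = K" "nat (m - 1) = M" using kK mM by auto
  have "G m k = (if Suc K \<le> Suc M then int (Suc M choose Suc K) else 0)"
    unfolding G_def n1 using kK mM by simp
  moreover have "G (m - 1) (k - 1) = (if K \<le> M then int (M choose K) else 0)"
    unfolding G_def n1 using kK mM by simp
  moreover have "G (m - 1) k = (if Suc K \<le> M then int (M choose Suc K) else 0)"
    unfolding G_def n1 using kK mM by simp
  ultimately show ?thesis by auto
qed

lemma G_zero: "G m 0 = (if m \<ge> 0 then 1 else 0)" by (simp add: G_def)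

lemma F_rec: "F (Suc (Suc n)) i j = F (Suc n) (i - 1) j + F (Suc n) i (j - 1) + F (Suc n) i j - F n i (j - 1)"
proof -
  consider "i < 0" | "i = 0" | "i = 1" | "i \<ge> 2" by linarith
  then show ?thesis
  proof cases
    case 1
    then show ?thesis by (simp add: F_def G_def)
  next
    case 2
    then show ?thesis by (simp add: F_def G_def)
  next
    case 3
    have p1: "G (int n + 1 - j) 1 = G (int n - j) 0 + G (int n - j) 1" 
    proof -
      have h: "int n + 1 - j - 1 = int n - j" by simp
      have "G (int n + 1 - j) 1 = G (int n + 1 - j - 1) (1 - 1) + G (int n + 1 - j - 1) 1"
        by (rule G_pascal) simp
      then show ?thesis unfolding h by simp
    qed
    have p2: "G (1 + j) 1 = G j 0 + G j 1"
    proof -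
      have "G (1 + j) 1 = G (1 + j - 1) (1 - 1) + G (1 + j - 1) 1" by (rule G_pascal) simp
      then show ?thesis by simp
    qed
    have e1: "F (Suc (Suc n)) i j = G (int n + 1 - j) 0 * G (1 + j) 1" using 3 by (simp add: F_def algebra_simps)
    have e2: "F (Suc n) (i - 1) j = (if j = int n + 1 then 1 else 0)" using 3 by (simp add: F_def)
    have e3: "F (Suc n) i (j - 1) = G (int n + 1 - j) 0 * G j 1" using 3 by (simp add: F_def algebra_simps)
    have e4: "F (Suc n) i j = G (int n - j) 0 * G (1 + j) 1" using 3 by (simp add: F_def algebra_simps)
    have e5: "F n i (j - 1) = G (int n - j) 0 * G j 1" using 3 by (simp add: F_def algebra_simps)
    show ?thesis unfolding e1 e2 e3 e4 e5 p2 by (simp add: G_zero algebra_simps)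
  next
    case 4
    define a where "a = int n - j"
    define m where "m = i + j"
    have e1: "F (Suc (Suc n)) i j = G (a + 1) (i - 1) * G m i" using 4 by (simp add: F_def a_def m_def algebra_simps)
    have e2: "F (Suc n) (i - 1) j = G a (i - 2) * G (m - 1) (i - 1)" using 4 by (simp add: F_def a_def m_def algebra_simps)
    have e3: "F (Suc n) i (j - 1) = G (a + 1) (i - 1) * G (m - 1) i" using 4 by (simp add: F_def a_def m_def algebra_simps)
    have e4: "F (Suc n) i j = G a (i - 1) * G m i" using 4 by (simp add: F_def a_def m_def algebra_simps)
    have e5: "F n i (j - 1) = G a (i - 1) * G (m - 1) i" using 4 by (simp add: F_def a_def m_def algebra_simps)
    have p1: "G m i = G (m - 1) (i - 1) + G (m - 1) i" by (rule G_pascal) (use 4 in simp)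
    have p2: "G (a + 1) (i - 1) = G a (i - 2) + G a (i - 1)" 
    proof -
      have "G (a + 1) (i - 1) = G (a + 1 - 1) (i - 1 - 1) + G (a + 1 - 1) (i - 1)"
        by (rule G_pascal) (use 4 in simp)
      then show ?thesis by simp
    qed
    show ?thesis unfolding e1 e2 e3 e4 e5 p1 p2 by (simp add: algebra_simps)
  qed
qed


definition ev :: "nat \<Rightarrow> (int \<Rightarrow> int \<Rightarrow> int) \<Rightarrow> real \<Rightarrow> real \<Rightarrow> real" where
  "ev N c p q = (\<Sum>i\<le>N. \<Sum>j\<le>N. real_of_int (c (int i) (int j)) * p ^ i * q ^ j)"

definition supp :: "nat \<Rightarrow> (int \<Rightarrow> int \<Rightarrow> int) \<Rightarrow> bool" where
  "supp N c \<longleftrightarrow> (\<forall>i j. c i j \<noteq> 0 \<longrightarrow> 0 \<le> i \<and> 0 \<le> j \<and> i \<le> int N \<and> j \<le> int N)"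

lemma ev_mono:
  assumes "supp N c" "N \<le> M"
  shows "ev M c p q = ev N c p q"
proof -
  have z: "c (int i) (int j) = 0" if "i > N \<or> j > N" for i j
    using assms(1) that unfolding supp_def by fastforce
  have inner: "(\<Sum>j\<le>M. real_of_int (c (int i) (int j)) * p ^ i * q ^ j)
      = (\<Sum>j\<le>N. real_of_int (c (int i) (int j)) * p ^ i * q ^ j)" for i
    by (rule sum.mono_neutral_right) (use assms(2) z in auto)
  have "ev M c p q = (\<Sum>i\<le>M. \<Sum>j\<le>N. real_of_int (c (int i) (int j)) * p ^ i * q ^ j)"
    unfolding ev_def using inner by simp
  also have "\<dots> = ev N c p q" unfolding ev_def
    by (rule sum.mono_neutral_right) (use assms(2) z in auto)
  finally show ?thesis .
qed

lemma ev_shiftI: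
  assumes "supp N c"
  shows "ev (Suc N) (\<lambda>i j. c (i - 1) j) p q = p * ev N c p q"
proof -
  define g where "g i = (\<Sum>j\<le>Suc N. real_of_int (c (int i) (int j)) * p ^ i * q ^ j)" for i
  have c0: "c (-1) j = 0" for j using assms unfolding supp_def by fastforce
  have cN: "c (1 + int N) j = 0" for j using assms unfolding supp_def by fastforce
  have "ev (Suc N) (\<lambda>i j. c (i - 1) j) p q
      = (\<Sum>i\<le>Suc N. \<Sum>j\<le>Suc N. real_of_int (c (int i - 1) (int j)) * p ^ i * q ^ j)"
    unfolding ev_def by simp
  also have "\<dots> = (\<Sum>j\<le>Suc N. real_of_int (c (- 1) (int j)) * p ^ 0 * q ^ j)
      + (\<Sum>i\<le>N. \<Sum>j\<le>Suc N. real_of_int (c (int (Suc i) - 1) (int j)) * p ^ Suc i * q ^ j)"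
    by (subst sum.atMost_Suc_shift) simp
  also have "\<dots> = (\<Sum>i\<le>N. p * g i)"
    by (simp add: c0 g_def sum_distrib_left algebra_simps)
  also have "\<dots> = p * (\<Sum>i\<le>Suc N. g i)"
  proof -
    have "g (Suc N) = 0" unfolding g_def by (simp add: cN)
    then show ?thesis by (simp only: sum.atMost_Suc sum_distrib_left) (simp add: sum_distrib_left)
  qed
  also have "(\<Sum>i\<le>Suc N. g i) = ev (Suc N) c p q" unfolding g_def ev_def by simp
  also have "\<dots> = ev N c p q" by (rule ev_mono[OF assms]) simp
  finally show ?thesis .
qed

lemma ev_shiftJ:
  assumes "supp N c"
  shows "ev (Suc N) (\<lambda>i j. c i (j - 1)) p q = q * ev N c p q"
proof -
  have c0: "c i (-1) = 0" for i using assms unfolding supp_def by fastforce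
  have cN: "c i (1 + int N) = 0" for i using assms unfolding supp_def by fastforce
  have inner: "(\<Sum>j\<le>Suc N. real_of_int (c (int i) (int j - 1)) * p ^ i * q ^ j)
     = q * (\<Sum>j\<le>Suc N. real_of_int (c (int i) (int j)) * p ^ i * q ^ j)" for i
  proof -
    have "(\<Sum>j\<le>Suc N. real_of_int (c (int i) (int j - 1)) * p ^ i * q ^ j)
      = real_of_int (c (int i) (- 1)) * p ^ i * q ^ 0
        + (\<Sum>j\<le>N. real_of_int (c (int i) (int (Suc j) - 1)) * p ^ i * q ^ Suc j)"
      by (subst sum.atMost_Suc_shift) simp
    also have "\<dots> = q * (\<Sum>j\<le>N. real_of_int (c (int i) (int j)) * p ^ i * q ^ j)"
      by (simp add: c0 sum_distrib_left algebra_simps)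
    also have "\<dots> = q * (\<Sum>j\<le>Suc N. real_of_int (c (int i) (int j)) * p ^ i * q ^ j)"
      by (simp add: cN)
    finally show ?thesis .
  qed
  have "ev (Suc N) (\<lambda>i j. c i (j - 1)) p q = q * ev (Suc N) c p q"
    by (simp only: ev_def inner sum_distrib_left)
  also have "\<dots> = q * ev N c p q" using ev_mono[OF assms, of "Suc N"] by simp
  finally show ?thesis .
qed

lemma ev_add: "ev N (\<lambda>i j. c i j + d i j) p q = ev N c p q + ev N d p q"
  unfolding ev_def by (simp add: sum.distrib algebra_simps)

lemma ev_diff: "ev N (\<lambda>i j. c i j - d i j) p q = ev N c p q - ev N d p q"
  unfolding ev_def by (simp add: sum_subtractf algebra_simps)

lemma supp_mono: "supp N c \<Longrightarrow> N \<le> M \<Longrightarrow> supp M c"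
  unfolding supp_def by force

lemma supp_shiftI: "supp N c \<Longrightarrow> supp (Suc N) (\<lambda>i j. c (i - 1) j)"
  unfolding supp_def by force

lemma supp_shiftJ: "supp N c \<Longrightarrow> supp (Suc N) (\<lambda>i j. c i (j - 1))"
  unfolding supp_def by force

lemma F_tri: "F n i j \<noteq> 0 \<Longrightarrow> 0 \<le> i \<and> 0 \<le> j \<and> i + j \<le> int n"
  unfolding F_def G_def by (auto split: if_splits)

lemma supp_F: "supp n (F n)"
  unfolding supp_def using F_tri by fastforce

lemma Q_ev: "Q n p q = ev n (F n) p q"
proof (induction n p q rule: Q.induct)
  case (1 p q)
  then show ?case by (simp add: ev_def F_def)
next
  case (2 p q)
  then show ?case by (simp add: ev_def F_def G_def)
next
  case (3 k p q)
  have "F (Suc (Suc k)) = (\<lambda>i j. ((F (Suc k) (i - 1) j + F (Suc k) i (j - 1)) + F (Suc k) i j) - F k i (j - 1))"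
    using F_rec by (intro ext) simp
  then have "ev (Suc (Suc k)) (F (Suc (Suc k))) p q
     = ev (Suc (Suc k)) (\<lambda>i j. F (Suc k) (i - 1) j) p q + ev (Suc (Suc k)) (\<lambda>i j. F (Suc k) i (j - 1)) p q
       + ev (Suc (Suc k)) (F (Suc k)) p q - ev (Suc (Suc k)) (\<lambda>i j. F k i (j - 1)) p q"
    by (simp add: ev_add ev_diff)
  also have "\<dots> = p * Q (Suc k) p q + q * Q (Suc k) p q + Q (Suc k) p q - q * Q k p q"
  proof -
    have a: "ev (Suc (Suc k)) (\<lambda>i j. F (Suc k) (i - 1) j) p q = p * Q (Suc k) p q"
      using ev_shiftI[OF supp_F] 3 by simp
    have b: "ev (Suc (Suc k)) (\<lambda>i j. F (Suc k) i (j - 1)) p q = q * Q (Suc k) p q"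
      using ev_shiftJ[OF supp_F] 3 by simp
    have c: "ev (Suc (Suc k)) (F (Suc k)) p q = Q (Suc k) p q"
      using ev_mono[OF supp_F, of "Suc k" "Suc (Suc k)"] 3 by simp
    have d: "ev (Suc (Suc k)) (\<lambda>i j. F k i (j - 1)) p q = q * Q k p q"
      using ev_mono[OF supp_shiftJ[OF supp_F[of k]], of "Suc (Suc k)"] ev_shiftJ[OF supp_F[of k]] 3
      by simp
    show ?thesis using a b c d by simp
  qed
  also have "\<dots> = Q (Suc (Suc k)) p q" by (simp add: algebra_simps)
  finally show ?case by simp
qed


lemma L1nat: "(m choose k) * (m choose (k + 2)) \<le> (m choose (k + 1))\<^sup>2"
proof -
  define a where "a = m choose k"
  define b where "b = m choose (k + 1)"
  define c where "c = m choose (k + 2)"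
  have h1: "(k + 1) * b = (m - k) * a"
    using binomial_absorption[of k m] binomial_absorb_comp[of m k] by (simp add: a_def b_def)
  have h2: "(k + 2) * c = (m - (k + 1)) * b"
    using binomial_absorption[of "Suc k" m] binomial_absorb_comp[of m "Suc k"] by (simp add: b_def c_def)
  have "a * c \<le> b * b"
  proof (cases "m \<le> k")
    case True
    then have "b = 0" using h1 by simp
    then have "c = 0" using h2 by simp
    then show ?thesis by simp
  next
    case False
    have "((m - k) * (k + 2)) * (a * c) = ((m - k) * a) * ((k + 2) * c)" by (simp add: algebra_simps)
    also have "\<dots> = ((k + 1) * b) * ((m - (k + 1)) * b)" by (simp only: h1[symmetric] h2)
    also have "\<dots> = ((k + 1) * (m - (k + 1))) * (b * b)" by (simp only: ac_simps)
    also have "\<dots> \<le> ((k + 2) * (m - k)) * (b * b)"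
      by (intro mult_le_mono1 mult_le_mono) auto
    finally have "((m - k) * (k + 2)) * (a * c) \<le> ((m - k) * (k + 2)) * (b * b)" by (simp add: mult.commute)
    then show "a * c \<le> b * b" using False by simp
  qed
  then show ?thesis by (simp add: a_def b_def c_def power2_eq_square)
qed

lemma L2nat: "(m choose k) * ((m + 2) choose k) \<le> ((m + 1) choose k)\<^sup>2"
proof -
  define a where "a = m choose k"
  define b where "b = (m + 1) choose k"
  define c where "c = (m + 2) choose k"
  have h1: "(m + 1 - k) * b = (m + 1) * a"
    using binomial_absorb_comp[of "m + 1" k] by (simp add: a_def b_def)
  have h2: "(m + 2 - k) * c = (m + 2) * b"
    using binomial_absorb_comp[of "m + 2" k] by (simp add: b_def c_def)
  show ?thesis
  proof (cases "k \<le> m + 1")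
    case False
    then have "a = 0" by (simp add: a_def)
    then show ?thesis by (simp add: a_def[symmetric] b_def[symmetric] c_def[symmetric])
  next
    case True
    have "((m + 1) * (m + 2 - k)) * (a * c) = ((m + 1) * a) * ((m + 2 - k) * c)" by (simp add: algebra_simps)
    also have "\<dots> = ((m + 1 - k) * b) * ((m + 2) * b)" by (simp only: h1[symmetric] h2)
    also have "\<dots> = ((m + 1 - k) * (m + 2)) * (b * b)" by (simp only: ac_simps)
    also have "\<dots> \<le> ((m + 1) * (m + 2 - k)) * (b * b)"
    proof (intro mult_le_mono1)
      have "(m + 1 - k) * (m + 2) + k * (m + 2) = (m + 1) * (m + 2)" using True
        by (metis add_mult_distrib le_add_diff_inverse2)
      moreover have "(m + 1) * (m + 2 - k) + k * (m + 1) = (m + 1) * (m + 2)" using True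
        by (metis add_mult_distrib2 le_add_diff_inverse2 mult.commute le_Suc_eq add_2_eq_Suc' Suc_eq_plus1)
      moreover have "k * (m + 1) \<le> k * (m + 2)" by simp
      ultimately show "(m + 1 - k) * (m + 2) \<le> (m + 1) * (m + 2 - k)" by linarith
    qed
    finally have "((m + 1) * (m + 2 - k)) * (a * c) \<le> ((m + 1) * (m + 2 - k)) * (b * b)" .
    then have "a * c \<le> b * b" using True by simp
    then show ?thesis by (simp add: a_def b_def c_def power2_eq_square)
  qed
qed

lemma GL1: "G m (k - 1) * G m (k + 1) \<le> (G m k)\<^sup>2"
proof (cases "1 \<le> k \<and> k + 1 \<le> m")
  case False
  then have "G m (k - 1) * G m (k + 1) = 0" by (auto simp: G_def)
  then show ?thesis by (metis zero_le_power2)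
next
  case True
  define M where "M = nat m"
  define K where "K = nat (k - 1)"
  have "G m (k - 1) = int (M choose K)" "G m k = int (M choose (K + 1))" "G m (k + 1) = int (M choose (K + 2))"
    using True by (auto simp: G_def M_def K_def nat_add_distrib[symmetric] intro!: arg_cong2[where f = "(choose)"])
  then show ?thesis using L1nat[of M K]
    by (metis of_nat_le_iff of_nat_mult of_nat_power)
qed

lemma GL2: "G (m - 1) k * G (m + 1) k \<le> (G m k)\<^sup>2"
proof (cases "0 \<le> k \<and> k \<le> m - 1")
  case False
  then have "G (m - 1) k = 0" by (auto simp: G_def)
  then show ?thesis by simp
next
  case True
  define M where "M = nat (m - 1)"
  define K where "K = nat k"
  have "G (m - 1) k = int (M choose K)" "G m k = int ((M + 1) choose K)" "G (m + 1) k = int ((M + 2) choose K)"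
    using True by (auto simp: G_def M_def K_def intro!: arg_cong2[where f = "(choose)"])
  then show ?thesis using L2nat[of M K]
    by (metis of_nat_le_iff of_nat_mult of_nat_power)
qed

lemma Gsym: "G m k = G m (m - k)"
proof (cases "0 \<le> k \<and> k \<le> m")
  case True
  then have "nat (m - k) = nat m - nat k" by auto
  then show ?thesis using True binomial_symmetric[of "nat k" "nat m"] by (auto simp: G_def)
next
  case False
  then show ?thesis by (auto simp: G_def)
qed

lemma prodlc:
  fixes a b c d e f :: int
  assumes "0 \<le> b" "0 \<le> c" "0 \<le> e" "0 \<le> f" "b * c \<le> a\<^sup>2" "e * f \<le> d\<^sup>2"
  shows "(b * e) * (c * f) \<le> (a * d)\<^sup>2"
proof -
  have "(b * e) * (c * f) = (b * c) * (e * f)" by (simp add: algebra_simps)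
  also have "\<dots> \<le> a\<^sup>2 * d\<^sup>2" using assms by (intro mult_mono) auto
  finally show ?thesis by (simp add: power_mult_distrib)
qed

lemma F_nonneg: "0 \<le> F n i j" by (simp add: F_def G_nonneg)

lemma F_alt: "i \<noteq> 0 \<Longrightarrow> F n i j = G (int n - 1 - j) (i - 1) * G (i + j) j"
  unfolding F_def using Gsym[of "i + j" i] by simp

lemma F_alt2: "i \<noteq> 0 \<Longrightarrow> F n i j = G (int n - 1 - j) (int n - i - j) * G (i + j) i"
  unfolding F_def using Gsym[of "int n - 1 - j" "i - 1"] by (simp add: algebra_simps)

lemma F_H: "F n (i - 1) j * F n (i + 1) j \<le> (F n i j)\<^sup>2"
proof -
  consider "i \<le> 0" | "i = 1" | "i \<ge> 2" by linarith
  then show ?thesis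
  proof cases
    case 1
    then have "F n (i - 1) j = 0" by (simp add: F_def G_def)
    then show ?thesis by simp
  next
    case 2
    then have "F n (i - 1) j * F n (i + 1) j = 0" by (simp add: F_def G_def)
    then show ?thesis by (metis zero_le_power2)
  next
    case 3
    have e1: "F n (i - 1) j = G (int n - 1 - j) (i - 1 - 1) * G (i + j - 1) j" using 3 by (simp add: F_alt algebra_simps)
    have e2: "F n i j = G (int n - 1 - j) (i - 1) * G (i + j) j" using 3 by (simp add: F_alt algebra_simps)
    have e3: "F n (i + 1) j = G (int n - 1 - j) (i - 1 + 1) * G (i + j + 1) j" using 3 by (simp add: F_alt algebra_simps)
    show ?thesis unfolding e1 e2 e3
      by (rule prodlc[OF G_nonneg G_nonneg G_nonneg G_nonneg GL1 GL2])
  qed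
qed

lemma F_V: "F n i (j - 1) * F n i (j + 1) \<le> (F n i j)\<^sup>2"
proof -
  consider "i < 0" | "i = 0" | "i \<ge> 1" by linarith
  then show ?thesis
  proof cases
    case 1
    then have "F n i (j - 1) = 0" by (simp add: F_def G_def)
    then show ?thesis by simp
  next
    case 2
    then have "F n i (j - 1) * F n i (j + 1) = 0" by (simp add: F_def)
    then show ?thesis by (metis zero_le_power2)
  next
    case 3
    have e1: "F n i (j - 1) = G (int n - 1 - j + 1) (i - 1) * G (i + j - 1) i" using 3 by (simp add: F_def algebra_simps)
    have e2: "F n i j = G (int n - 1 - j) (i - 1) * G (i + j) i" using 3 by (simp add: F_def algebra_simps)
    have e3: "F n i (j + 1) = G (int n - 1 - j - 1) (i - 1) * G (i + j + 1) i" using 3 by (simp add: F_def algebra_simps)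
    have "(G (int n - 1 - j - 1) (i - 1) * G (i + j - 1) i) * (G (int n - 1 - j + 1) (i - 1) * G (i + j + 1) i)
        \<le> (G (int n - 1 - j) (i - 1) * G (i + j) i)\<^sup>2"
      by (rule prodlc[OF G_nonneg G_nonneg G_nonneg G_nonneg GL2 GL2])
    then show ?thesis unfolding e1 e2 e3 by (simp add: algebra_simps)
  qed
qed

lemma F_D: "F n (i - 1) (j + 1) * F n (i + 1) (j - 1) \<le> (F n i j)\<^sup>2"
proof -
  consider "i \<le> 0" | "i = 1" | "i \<ge> 2" by linarith
  then show ?thesis
  proof cases
    case 1
    then have "F n (i - 1) (j + 1) = 0" by (simp add: F_def G_def)
    then show ?thesis by simp
  next
    case 2
    show ?thesis
    proof (cases "j + 1 = int n")
      case False
      then have "F n (i - 1) (j + 1) = 0" using 2 by (simp add: F_def)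
      then show ?thesis by simp
    next
      case True
      have m0: "int n - j = 1" using True by simp
      have e1: "F n (i - 1) (j + 1) = 1" using 2 True by (simp add: F_def)
      have e2: "F n (i + 1) (j - 1) = G 1 1 * G (int n) 2" using 2 True m0 by (simp add: F_def algebra_simps)
      have e3: "F n i j = G 0 0 * G (int n) 1" using 2 True by (simp add: F_def algebra_simps)
      have "G (int n) (1 - 1) * G (int n) (1 + 1) \<le> (G (int n) 1)\<^sup>2" by (rule GL1)
      then show ?thesis unfolding e1 e2 e3 by (simp add: G_def)
    qed
  next
    case 3
    have e1: "F n (i - 1) (j + 1) = G (int n - 1 - j - 1) (int n - i - j) * G (i + j) (i - 1)"
      using 3 by (simp add: F_alt2 algebra_simps)
    have e2: "F n i j = G (int n - 1 - j) (int n - i - j) * G (i + j) i"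
      using 3 by (simp add: F_alt2 algebra_simps)
    have e3: "F n (i + 1) (j - 1) = G (int n - 1 - j + 1) (int n - i - j) * G (i + j) (i + 1)"
      using 3 by (simp add: F_alt2 algebra_simps)
    show ?thesis unfolding e1 e2 e3
      by (rule prodlc[OF G_nonneg G_nonneg G_nonneg G_nonneg GL2 GL1])
  qed
qed


lemma poly_pos_zero:
  fixes a :: "nat \<Rightarrow> real"
  assumes "\<forall>x>0. (\<Sum>i\<le>N. a i * x ^ i) = 0" "k \<le> N"
  shows "a k = 0"
proof (rule ccontr)
  assume "a k \<noteq> 0"
  then have "finite {x. (\<Sum>i\<le>N. a i * x ^ i) = 0}"
    using polyfun_finite_roots[of a N] assms(2) by blast
  moreover have "{0<..} \<subseteq> {x. (\<Sum>i\<le>N. a i * x ^ i) = 0}" using assms(1) by auto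
  ultimately have "finite {(0::real)<..}" using finite_subset by blast
  then show False using infinite_Ioi by blast
qed

lemma ev_zero:
  assumes "\<forall>p q. p > 0 \<longrightarrow> q > 0 \<longrightarrow> ev N c p q = 0" "i \<le> N" "j \<le> N"
  shows "c (int i) (int j) = 0"
proof -
  have inner: "(\<Sum>j\<le>N. real_of_int (c (int i) (int j)) * q ^ j) = 0" if q: "q > 0" for q
  proof -
    have "\<forall>p>0. (\<Sum>i\<le>N. (\<Sum>j\<le>N. real_of_int (c (int i) (int j)) * q ^ j) * p ^ i) = 0"
    proof (intro allI impI)
      fix p :: real assume "p > 0"
      then have "ev N c p q = 0" using assms(1) q by blast
      then show "(\<Sum>i\<le>N. (\<Sum>j\<le>N. real_of_int (c (int i) (int j)) * q ^ j) * p ^ i) = 0"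
        unfolding ev_def by (simp add: sum_distrib_right sum_distrib_left algebra_simps)
    qed
    from poly_pos_zero[OF this assms(2)] show ?thesis .
  qed
  have "\<forall>q>0. (\<Sum>j\<le>N. real_of_int (c (int i) (int j)) * q ^ j) = 0" using inner by blast
  from poly_pos_zero[OF this assms(3)] show ?thesis by simp
qed


lemma intsum: "(\<Sum>i\<in>{0..int n}. g i) = (\<Sum>i\<le>n. g (int i))"
proof -
  have "{0..int n} = int ` {0..n}" by (simp add: image_int_atLeastAtMost)
  then have "(\<Sum>i\<in>{0..int n}. g i) = (\<Sum>i\<in>{0..n}. g (int i))" by (simp add: sum.reindex)
  then show ?thesis by (simp add: atMost_atLeast0)
qed

theorem theorem6p4:
  fixes n :: nat and M :: "real \<Rightarrow> real \<Rightarrow> real \<Rightarrow> real" and A :: "int \<Rightarrow> int \<Rightarrow> int"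
  assumes "n \<ge> 1"
    and "markov (1, int n) M"
    and "P_coeffs 1 n A M"
  shows "\<forall>i j. (A i j)\<^sup>2 \<ge> A (i - 1) j * A (i + 1) j
             \<and> (A i j)\<^sup>2 \<ge> A i (j - 1) * A i (j + 1)
             \<and> (A i j)\<^sup>2 \<ge> A (i - 1) (j + 1) * A (i + 1) (j - 1)"
proof -
  have D: "int (1 + n - 1) = int n" by simp
  have zA: "\<forall>i j. (i < 0 \<or> j < 0 \<or> i + j > int n) \<longrightarrow> A i j = 0"
    using assms(3) unfolding P_coeffs_def Let_def D by blast
  have eq0: "\<forall>x y z :: real. x > 0 \<longrightarrow> y > 0 \<longrightarrow> z > 0 \<longrightarrow>
         M x y z = (\<Sum>i = 0..int n. \<Sum>j = 0..int n - i.
                      of_int (A i j) * (x\<^sup>2) ^ nat i * (y\<^sup>2) ^ nat j * (z\<^sup>2) ^ nat (int n - i - j))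
                   / (x ^ (1 - 1) * y ^ (n - 1) * z ^ (1 + n - 1))"
    using assms(3) unfolding P_coeffs_def Let_def D by blast
  have S: "(\<Sum>i = 0..int n. \<Sum>j = 0..int n - i. of_int (A i j) * p ^ nat i * q ^ nat j) = ev n A p q"
    for p q :: real
  proof -
    have "(\<Sum>i = 0..int n. \<Sum>j = 0..int n - i. of_int (A i j) * p ^ nat i * q ^ nat j)
        = (\<Sum>i = 0..int n. \<Sum>j = 0..int n. of_int (A i j) * p ^ nat i * q ^ nat j)"
    proof (rule sum.cong[OF refl])
      fix i assume "i \<in> {0..int n}"
      show "(\<Sum>j = 0..int n - i. of_int (A i j) * p ^ nat i * q ^ nat j)
          = (\<Sum>j = 0..int n. of_int (A i j) * p ^ nat i * q ^ nat j)"
      proof (rule sum.mono_neutral_left)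
        show "\<forall>j\<in>{0..int n} - {0..int n - i}. of_int (A i j) * p ^ nat i * q ^ nat j = 0"
        proof
          fix j assume "j \<in> {0..int n} - {0..int n - i}"
          then have "i + j > int n" using \<open>i \<in> {0..int n}\<close> by auto
          then show "of_int (A i j) * p ^ nat i * q ^ nat j = 0" using zA by simp
        qed
      qed (use \<open>i \<in> {0..int n}\<close> in auto)
    qed
    also have "\<dots> = ev n A p q" unfolding ev_def intsum by simp
    finally show ?thesis .
  qed
  have key: "ev n A p q = ev n (F n) p q" if p: "p > 0" and q: "q > 0" for p q
  proof -
    define x where "x = sqrt p"
    define y where "y = sqrt q"
    have x: "x > 0" "x\<^sup>2 = p" using p x_def by auto
    have y: "y > 0" "y\<^sup>2 = q" using q y_def by auto
    have m1: "M x y 1 = Q n p q * y / y ^ n" using markov_1n[OF assms(2) x(1) y(1)] x y by simp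
    have m2: "M x y 1 = ev n A p q / y ^ (n - 1)"
      using eq0 x y S[of p q] by simp
    have yn: "y ^ n = y * y ^ (n - 1)" using assms(1) by (metis power_eq_if not_one_le_zero)
    have "ev n A p q = Q n p q" using m1 m2 y(1) yn by (simp add: field_simps)
    then show ?thesis using Q_ev by simp
  qed
  have AF: "A = F n"
  proof (intro ext)
    fix i j
    show "A i j = F n i j"
    proof (cases "0 \<le> i \<and> 0 \<le> j \<and> i \<le> int n \<and> j \<le> int n")
      case True
      have z: "\<forall>p q. p > 0 \<longrightarrow> q > 0 \<longrightarrow> ev n (\<lambda>i j. A i j - F n i j) p q = 0"
        using key by (simp add: ev_diff)
      have b: "nat i \<le> n" "nat j \<le> n" using True by auto
      have "A (int (nat i)) (int (nat j)) - F n (int (nat i)) (int (nat j)) = 0"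
        by (rule ev_zero[OF z b])
      then show ?thesis using True by simp
    next
      case False
      note nb = False
      then have a: "A i j = 0" proof (cases "i < 0 \<or> j < 0")
        case True then show ?thesis using zA by blast
      next
        case False then show ?thesis using zA nb by force
      qed
      have "F n i j = 0" using F_tri[of n i j] False by force
      then show ?thesis using a by simp
    qed
  qed
  show ?thesis unfolding AF using F_H F_V F_D by blast
qed

end
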